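(* Each of the ball relations $\mathbf{B}^{\infty}$ and $\mathbf{B}^{1}$ on $\mathfrak{S}\mathbb{Q}$ (with equivalence $\asymp_{\mathfrak{S}\mathbb{Q}}$) respects the equivalence and satisfies the five metric-space axioms, so that $\mathfrak{S}^\infty\mathbb{Q}$ and $\mathfrak{S}^1\mathbb{Q}$ are metric spaces. More generally, for any metric space $X$, the relation $\mathbf{B}^{\mathfrak{S}^\infty X}_\varepsilon f\,g := \mathsf{fold}_\star(\mathbf{B}^X_\varepsilon\circ f @ g)$ makes $\mathfrak{S}X$ a metric space $\mathfrak{S}^\infty X$.
   Context: Step functions. For a type $X$, $\mathfrak{S}X$ is the inductive type of (formal, rational) step functions on $[0,1]$: constructors $\mathsf{const}\ x$ ($x\in X$, written $\hat x$) and $\mathsf{glue}\ o\ f\ g$ ($o\in(0,1)\cap\mathbb{Q}$, $f,g\in\mathfrak{S}X$). Split. For $a\in(0,1)\cap\mathbb{Q}$: $\mathsf{SplitL}\ \hat x\ a := \hat x$, $\mathsf{SplitR}\ \hat x\ a:=\hat x$, and $\mathsf{SplitL}(\mathsf{glue}\ o\ f_l\ f_r)\ a :=$ $\mathsf{SplitL}\ f_l\ (a/o)$ if $a<o$; $f_l$ if $a=o$; $\mathsf{glue}\ (o/a)\ f_l\ (\mathsf{SplitL}\ f_r\ \tfrac{a-o}{1-o})$ if $a>o$. $\mathsf{SplitR}(\mathsf{glue}\ o\ f_l\ f_r)\ a :=$ $\mathsf{glue}\ \tfrac{o-a}{1-a}\ (\mathsf{SplitR}\ f_l\ (a/o))\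 f_r$ if $a<o$; $f_r$ if $a=o$; $\mathsf{SplitR}\ f_r\ \tfrac{a-o}{1-o}$ if $a>o$. Map and ap. $\mathsf{map}\ \varphi\ \hat x := \widehat{\varphi x}$, $\mathsf{map}\ \varphi\ (\mathsf{glue}\ o\ f\ g):=\mathsf{glue}\ o\ (\mathsf{map}\ \varphi\ f)(\mathsf{map}\ \varphi\ g)$; $\varphi\circ x:=\mathsf{map}\ \varphi\ x$. $\hat\varphi @ x := \mathsf{map}\ \varphi\ x$, $(\mathsf{glue}\ o\ F_l\ F_r) @ x := \mathsf{glue}\ o\ (F_l @ \mathsf{SplitL}\ x\ o)\ (F_r @ \mathsf{SplitR}\ x\ o)$. $f\{\circledast\}g := (\lambda u v. u\circledast v)\circ f @ g$. Fold. $\mathsf{fold}\ \varphi\ \psi\ \hat x:=\varphi x$, $\mathsf{fold}\ \varphi\ \psi\ (\mathsf{glue}\ o\ f\ g) := \psi\ o\ (\mathsf{fold}\ \varphi\ \psi\ f)(\mathsf{fold}\ \varphi\ \psi\ g)$. $\mathsf{fold}_\star := \mathsf{fold}\ \mathrm{id}\ (\lambda o\,p\,q.\ p\wedge q)$, $\mathsf{fold}_{\sup} := \mathsf{fold}\ \mathrm{id}\ (\lambda o\,x\,y.\max x\,y)$, $\mathsf{fold}_{\mathrm{affine}} := \mathsf{fold}\ \mathrm{id}\ (\lambda o\,x\,y.\ ox+(1-o)y)$. Equivalence. For a setoid $X$, $f\asymp_{\mathfrak{S}X} g := \mathsf{fold}_\star(f\{\asymp_X\}g)$. Norms and balls. $\|f\|_\infty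 := \mathsf{fold}_{\sup}(\mathsf{abs}\circ f)$, $\|f\|_1 := \mathsf{fold}_{\mathrm{affine}}(\mathsf{abs}\circ f)$; for $\varepsilon\in\mathbb{Q}^+$, $\mathbf{B}^\infty_\varepsilon f\,g := \|f\{-\}g\|_\infty\le\varepsilon$ and $\mathbf{B}^1_\varepsilon f\,g:=\|f\{-\}g\|_1\le\varepsilon$. Metric space. A metric space is a setoid $(X,\asymp)$ with a respectful relation $\mathbf{B}:\mathbb{Q}^+\Rightarrow X\Rightarrow X\Rightarrow\mathrm{Prop}$ such that for all $x,y,z$ and $\varepsilon,\varepsilon_1,\varepsilon_2\in\mathbb{Q}^+$: (1) $\mathbf{B}_\varepsilon x\,x$; (2) $\mathbf{B}_\varepsilon x\,y\Rightarrow\mathbf{B}_\varepsilon y\,x$; (3) $\mathbf{B}_{\varepsilon_1}x\,y\Rightarrow\mathbf{B}_{\varepsilon_2}y\,z\Rightarrow\mathbf{B}_{\varepsilon_1+\varepsilon_2}x\,z$; (4) $(\forall\delta.\ \varepsilon<\delta\Rightarrow\mathbf{B}_\delta x\,y)\Rightarrow\mathbf{B}_\varepsilon x\,y$; (5) $(\forall\varepsilon.\ \mathbf{B}_\varepsilon x\,y)\Rightarrow x\asymp y$. $\mathbb{Q}$ has $\mathbf{B}_\varepsilon x\,y := |x-y|\le\varepsilon$. *)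

theory Defs
  imports Main "HOL.Rat"
begin

typedef ounit = "{q::rat. 0 < q \<and> q < 1}"
  by (rule exI[of _ "1/2"]) simp

datatype 'a stepfun = Const 'a | Glue ounit "'a stepfun" "'a stepfun"

(* a / c, for a < c *)
definition div_ou :: "ounit \<Rightarrow> ounit \<Rightarrow> ounit" where
  "div_ou a c = Abs_ounit (Rep_ounit a / Rep_ounit c)"

(* (a - c) / (1 - c), for a > c *)
definition rescale_ou :: "ounit \<Rightarrow> ounit \<Rightarrow> ounit" where
  "rescale_ou a c = Abs_ounit ((Rep_ounit a - Rep_ounit c) / (1 - Rep_ounit c))"

primrec splitL :: "'a stepfun \<Rightarrow> ounit \<Rightarrow> 'a stepfun" where
  "splitL (Const x) a = Const x"
| "splitL (Glue c fl fr) a =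
     (if Rep_ounit a < Rep_ounit c then splitL fl (div_ou a c)
      else if Rep_ounit a = Rep_ounit c then fl
      else Glue (div_ou c a) fl (splitL fr (rescale_ou a c)))"

primrec splitR :: "'a stepfun \<Rightarrow> ounit \<Rightarrow> 'a stepfun" where
  "splitR (Const x) a = Const x"
| "splitR (Glue c fl fr) a =
     (if Rep_ounit a < Rep_ounit c then
        Glue (Abs_ounit ((Rep_ounit c - Rep_ounit a) / (1 - Rep_ounit a)))
             (splitR fl (div_ou a c)) fr
      else if Rep_ounit a = Rep_ounit c then fr
      else splitR fr (rescale_ou a c))"

primrec sf_map :: "('a \<Rightarrow> 'b) \<Rightarrow> 'a stepfun \<Rightarrow> 'b stepfun" where
  "sf_map \<phi> (Const x) = Const (\<phi> x)"
| "sf_map \<phi> (Glue c f g) = Glue c (sf_map \<phi> f) (sf_map \<phi> g)"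

primrec sf_ap :: "('a \<Rightarrow> 'b) stepfun \<Rightarrow> 'a stepfun \<Rightarrow> 'b stepfun" where
  "sf_ap (Const \<phi>) x = sf_map \<phi> x"
| "sf_ap (Glue c Fl Fr) x = Glue c (sf_ap Fl (splitL x c)) (sf_ap Fr (splitR x c))"

definition sf_binop :: "('a \<Rightarrow> 'b \<Rightarrow> 'c) \<Rightarrow> 'a stepfun \<Rightarrow> 'b stepfun \<Rightarrow> 'c stepfun" where
  "sf_binop op f g = sf_ap (sf_map (\<lambda>u v. op u v) f) g"

primrec sf_fold :: "('a \<Rightarrow> 'b) \<Rightarrow> (rat \<Rightarrow> 'b \<Rightarrow> 'b \<Rightarrow> 'b) \<Rightarrow> 'a stepfun \<Rightarrow> 'b" where
  "sf_fold \<phi> \<psi> (Const x) = \<phi> x"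
| "sf_fold \<phi> \<psi> (Glue c f g) = \<psi> (Rep_ounit c) (sf_fold \<phi> \<psi> f) (sf_fold \<phi> \<psi> g)"

definition fold_star :: "bool stepfun \<Rightarrow> bool" where
  "fold_star = sf_fold id (\<lambda>c p q. p \<and> q)"

definition fold_sup :: "rat stepfun \<Rightarrow> rat" where
  "fold_sup = sf_fold id (\<lambda>c x y. max x y)"

definition fold_affine :: "rat stepfun \<Rightarrow> rat" where
  "fold_affine = sf_fold id (\<lambda>c x y. c * x + (1 - c) * y)"

definition sf_equiv :: "('a \<Rightarrow> 'a \<Rightarrow> bool) \<Rightarrow> 'a stepfun \<Rightarrow> 'a stepfun \<Rightarrow> bool" where
  "sf_equiv eq f g = fold_star (sf_binop eq f g)"

definition norm_inf :: "rat stepfun \<Rightarrow> rat" where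
  "norm_inf f = fold_sup (sf_map abs f)"

definition norm_1 :: "rat stepfun \<Rightarrow> rat" where
  "norm_1 f = fold_affine (sf_map abs f)"

definition ball_inf :: "rat \<Rightarrow> rat stepfun \<Rightarrow> rat stepfun \<Rightarrow> bool" where
  "ball_inf e f g = (norm_inf (sf_binop (-) f g) \<le> e)"

definition ball_1 :: "rat \<Rightarrow> rat stepfun \<Rightarrow> rat stepfun \<Rightarrow> bool" where
  "ball_1 e f g = (norm_1 (sf_binop (-) f g) \<le> e)"

definition ball_sup_lift :: "(rat \<Rightarrow> 'a \<Rightarrow> 'a \<Rightarrow> bool) \<Rightarrow> rat \<Rightarrow> 'a stepfun \<Rightarrow> 'a stepfun \<Rightarrow> bool" where
  "ball_sup_lift B e f g = fold_star (sf_ap (sf_map (B e) f) g)"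

definition is_metric_space :: "('a \<Rightarrow> 'a \<Rightarrow> bool) \<Rightarrow> (rat \<Rightarrow> 'a \<Rightarrow> 'a \<Rightarrow> bool) \<Rightarrow> bool" where
  "is_metric_space eq B \<longleftrightarrow>
     equivp eq \<and>
     (\<forall>e x x' y y'. 0 < e \<longrightarrow> eq x x' \<longrightarrow> eq y y' \<longrightarrow> (B e x y \<longleftrightarrow> B e x' y')) \<and>
     (\<forall>e x. 0 < e \<longrightarrow> B e x x) \<and>
     (\<forall>e x y. 0 < e \<longrightarrow> B e x y \<longrightarrow> B e y x) \<and>
     (\<forall>e1 e2 x y z. 0 < e1 \<longrightarrow> 0 < e2 \<longrightarrow> B e1 x y \<longrightarrow> B e2 y z \<longrightarrow> B (e1 + e2) x z) \<and>
     (\<forall>e x y. 0 < e \<longrightarrow> (\<forall>d. 0 < d \<longrightarrow> e < d \<longrightarrow> B d x y) \<longrightarrow> B e x y) \<and>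
     (\<forall>x y. (\<forall>e. 0 < e \<longrightarrow> B e x y) \<longrightarrow> eq x y)"

definition ball_rat :: "rat \<Rightarrow> rat \<Rightarrow> rat \<Rightarrow> bool" where
  "ball_rat e x y = (\<bar>x - y\<bar> \<le> e)"

end

theory Submission
  imports Defs "HOL-Analysis.Continuum_Not_Denumerable"
begin

definition II :: "real set" where "II = {t. 0 < t \<and> t < 1 \<and> t \<notin> \<rat>}"

lemma II_ne: "\<exists>t. t \<in> II"
proof (rule ccontr)
  assume "\<not> (\<exists>t. t \<in> II)"
  then have "{0<..<(1::real)} \<subseteq> \<rat>" by (auto simp: II_def)
  then have "countable {0<..<(1::real)}" using countable_rat countable_subset by blast
  then show False using uncountable_open_interval[of 0 "1::real"] by simp
qed

definition rr :: "ounit \<Rightarrow> real" where "rr c = real_of_rat (Rep_ounit c)"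

lemma Rep_bounds: "0 < Rep_ounit c" "Rep_ounit c < 1"
  using Rep_ounit[of c] by auto

lemma rr_bounds: "0 < rr c" "rr c < 1" "rr c \<in> \<rat>"
  using Rep_bounds[of c] by (auto simp: rr_def)

lemma Rep_div_ou: "Rep_ounit a < Rep_ounit c \<Longrightarrow> Rep_ounit (div_ou a c) = Rep_ounit a / Rep_ounit c"
  unfolding div_ou_def using Rep_bounds[of a] Rep_bounds[of c]
  by (subst Abs_ounit_inverse) (auto simp: divide_simps)

lemma Rep_rescale_ou: "Rep_ounit c < Rep_ounit a \<Longrightarrow> Rep_ounit (rescale_ou a c) = (Rep_ounit a - Rep_ounit c) / (1 - Rep_ounit c)"
  unfolding rescale_ou_def using Rep_bounds[of a] Rep_bounds[of c]
  by (subst Abs_ounit_inverse) (auto simp: divide_simps)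

lemma Rep_Abs3: "Rep_ounit a < Rep_ounit c \<Longrightarrow> Rep_ounit (Abs_ounit ((Rep_ounit c - Rep_ounit a) / (1 - Rep_ounit a))) = (Rep_ounit c - Rep_ounit a) / (1 - Rep_ounit a)"
  using Rep_bounds[of a] Rep_bounds[of c]
  by (subst Abs_ounit_inverse) (auto simp: divide_simps)

lemma irr1: "(t::real) \<notin> \<rat> \<Longrightarrow> q \<in> \<rat> \<Longrightarrow> r \<in> \<rat> \<Longrightarrow> r \<noteq> 0 \<Longrightarrow> q + r * t \<notin> \<rat>"
proof
  assume "t \<notin> \<rat>" "q \<in> \<rat>" "r \<in> \<rat>" "r \<noteq> 0" "q + r * t \<in> \<rat>"
  then have "((q + r*t) - q) / r \<in> \<rat>" by (intro Rats_divide Rats_diff) auto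
  then show False using \<open>r \<noteq> 0\<close> \<open>t \<notin> \<rat>\<close> by simp
qed

lemma irr2: "(t::real) \<notin> \<rat> \<Longrightarrow> q \<in> \<rat> \<Longrightarrow> r \<in> \<rat> \<Longrightarrow> r \<noteq> 0 \<Longrightarrow> (t - q) / r \<notin> \<rat>"
proof
  assume "t \<notin> \<rat>" "q \<in> \<rat>" "r \<in> \<rat>" "r \<noteq> 0" "(t - q) / r \<in> \<rat>"
  then have "q + r * ((t - q) / r) \<in> \<rat>" by (intro Rats_add Rats_mult) auto
  then show False using \<open>r \<noteq> 0\<close> \<open>t \<notin> \<rat>\<close> by simp
qed

lemma alg1: "0 < (C::real) \<Longrightarrow> C < A \<Longrightarrow> A < 1 \<Longrightarrow>
  (A - C) / (1 - C) * ((t - C / A) / (1 - C / A)) = (A * t - C) / (1 - C)"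
proof -
  assume h: "0 < C" "C < A" "A < 1"
  then have "1 - C / A = (A - C) / A" by (simp add: field_simps)
  moreover have "t - C / A = (A * t - C) / A" using h by (simp add: field_simps)
  ultimately have "(t - C / A) / (1 - C / A) = (A * t - C) / (A - C)" using h by simp
  moreover have "A - C \<noteq> 0" "1 - C \<noteq> 0" using h by auto
  ultimately show ?thesis by simp
qed

primrec ev :: "'a stepfun \<Rightarrow> real \<Rightarrow> 'a" where
  "ev (Const x) t = x"
| "ev (Glue c f g) t = (if t < rr c then ev f (t / rr c) else ev g ((t - rr c) / (1 - rr c)))"

lemma ev_splitL: "t \<in> II \<Longrightarrow> ev (splitL x a) t = ev x (rr a * t)"
proof (induction x arbitrary: a t)
  case (Const x)
  then show ?case by simp
next
  case (Glue c fl fr)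
  have t: "0 < t" "t < 1" "t \<notin> \<rat>" using Glue.prems by (auto simp: II_def)
  note b = rr_bounds[of a] rr_bounds[of c]
  have ltA: "rr a * t < rr a" using t b by simp
  consider "Rep_ounit a < Rep_ounit c" | "Rep_ounit a = Rep_ounit c" | "Rep_ounit c < Rep_ounit a" by fastforce
  then show ?case
  proof cases
    case 1
    then have lt: "rr a < rr c" by (simp add: rr_def of_rat_less)
    have "rr (div_ou a c) = rr a / rr c" using 1 by (simp add: rr_def Rep_div_ou of_rat_divide)
    then show ?thesis using 1 lt ltA Glue.IH(1)[of t "div_ou a c"] Glue.prems by simp
  next
    case 2
    then have "rr a = rr c" by (simp add: rr_def of_rat_less)
    then show ?thesis using 2 ltA b by simp
  next
    case 3
    then have lt: "rr c < rr a" by (simp add: rr_def of_rat_less)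
    have D: "rr (div_ou c a) = rr c / rr a" using 3 by (simp add: rr_def Rep_div_ou of_rat_divide)
    have R: "rr (rescale_ou a c) = (rr a - rr c) / (1 - rr c)" using 3
      by (simp add: rr_def Rep_rescale_ou of_rat_divide of_rat_diff)
    show ?thesis
    proof (cases "t < rr c / rr a")
      case True
      then have "rr a * t < rr c" using b by (simp add: field_simps)
      moreover have "ev (splitL (Glue c fl fr) a) t = ev fl (t / (rr c / rr a))" using True 3 by (simp add: D)
      moreover have "t / (rr c / rr a) = rr a * t / rr c" using b by simp
      ultimately show ?thesis by (simp add: mult.commute)
    next
      case False
      have neq: "t \<noteq> rr c / rr a" using t b by (metis Rats_divide)
      with False have gt: "t > rr c / rr a" by simp
      then have ge: "\<not> rr a * t < rr c" using b by (simp add: field_simps)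
      define s where "s = (t - rr c / rr a) / (1 - rr c / rr a)"
      have sQ: "s \<notin> \<rat>" unfolding s_def using t b lt by (intro irr2) auto
      have "0 < s" "s < 1" unfolding s_def using t b gt lt by (auto simp: field_simps)
      with sQ have sI: "s \<in> II" by (simp add: II_def)
      have "ev (splitL (Glue c fl fr) a) t = ev (splitL fr (rescale_ou a c)) s"
        using 3 D False by (simp add: s_def)
      also have "\<dots> = ev fr (rr (rescale_ou a c) * s)" using Glue.IH(2) sI by simp
      also have "rr (rescale_ou a c) * s = (rr a * t - rr c) / (1 - rr c)"
        unfolding R s_def using b lt by (intro alg1) auto
      finally show ?thesis using ge by simp
    qed
  qed
qed

lemma alg2: "0 < (A::real) \<Longrightarrow> A < C \<Longrightarrow> C < 1 \<Longrightarrow>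
  A / C + (1 - A / C) * (t / ((C - A) / (1 - A))) = (A + (1 - A) * t) / C"
proof -
  assume h: "0 < A" "A < C" "C < 1"
  then have nz: "1 - A \<noteq> 0" "C - A \<noteq> 0" "C \<noteq> 0" by auto
  then show ?thesis by (simp add: field_simps)
qed

lemma alg3: "0 < (A::real) \<Longrightarrow> A < C \<Longrightarrow> C < 1 \<Longrightarrow>
  (t - (C - A) / (1 - A)) / (1 - (C - A) / (1 - A)) = (A + (1 - A) * t - C) / (1 - C)"
proof -
  assume h: "0 < A" "A < C" "C < 1"
  then have nz: "1 - A \<noteq> 0" "1 - C \<noteq> 0" by auto
  have e1: "1 - (C - A) / (1 - A) = (1 - C) / (1 - A)" using nz by (simp add: field_simps)
  have e2: "t - (C - A) / (1 - A) = (A + (1 - A) * t - C) / (1 - A)" using nz by (simp add: field_simps)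
  show ?thesis unfolding e1 e2 using nz by simp
qed

lemma alg4: "0 < (C::real) \<Longrightarrow> C < A \<Longrightarrow> A < 1 \<Longrightarrow>
  (A - C) / (1 - C) + (1 - (A - C) / (1 - C)) * t = (A + (1 - A) * t - C) / (1 - C)"
proof -
  assume h: "0 < C" "C < A" "A < 1"
  then have nz: "1 - C \<noteq> 0" by auto
  have e1: "1 - (A - C) / (1 - C) = (1 - A) / (1 - C)" using nz by (simp add: field_simps)
  have e2: "(1 - A) / (1 - C) * t = (1 - A) * t / (1 - C)" by simp
  show ?thesis unfolding e1 e2 using nz by (simp add: add_divide_distrib[symmetric])
qed

lemma ev_splitR: "t \<in> II \<Longrightarrow> ev (splitR x a) t = ev x (rr a + (1 - rr a) * t)"
proof (induction x arbitrary: a t)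
  case (Const x)
  then show ?case by simp
next
  case (Glue c fl fr)
  have t: "0 < t" "t < 1" "t \<notin> \<rat>" using Glue.prems by (auto simp: II_def)
  note b = rr_bounds[of a] rr_bounds[of c]
  define s where "s = rr a + (1 - rr a) * t"
  have gtA: "rr a < s" using t b by (simp add: s_def)
  consider "Rep_ounit a < Rep_ounit c" | "Rep_ounit a = Rep_ounit c" | "Rep_ounit c < Rep_ounit a" by fastforce
  then show ?case
  proof cases
    case 1
    then have lt: "rr a < rr c" by (simp add: rr_def of_rat_less)
    have D: "rr (div_ou a c) = rr a / rr c" using 1 by (simp add: rr_def Rep_div_ou of_rat_divide)
    have E: "rr (Abs_ounit ((Rep_ounit c - Rep_ounit a) / (1 - Rep_ounit a))) = (rr c - rr a) / (1 - rr a)"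
      using 1 by (simp add: rr_def Rep_Abs3 of_rat_divide of_rat_diff)
    define e where "e = (rr c - rr a) / (1 - rr a)"
    have eQ: "e \<in> \<rat>" using b unfolding e_def by auto
    have e01: "0 < e" "e < 1" using b lt unfolding e_def by (auto simp: field_simps)
    have neq: "t \<noteq> e" using t eQ by auto
    show ?thesis
    proof (cases "t < e")
      case True
      have sl: "s < rr c" using True b lt unfolding s_def e_def by (simp add: field_simps)
      define u where "u = t / e"
      have uQ: "u \<notin> \<rat>" unfolding u_def using t eQ e01 irr2[of t 0 e] by auto
      have "0 < u" "u < 1" using t e01 True by (auto simp: u_def field_simps)
      with uQ have uI: "u \<in> II" by (simp add: II_def)
      have "ev (splitR (Glue c fl fr) a) t = ev (splitR fl (div_ou a c)) u"
        using 1 True by (simp add: E e_def u_def)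
      also have "\<dots> = ev fl (rr a / rr c + (1 - rr a / rr c) * u)" using Glue.IH(1) uI D by simp
      also have "rr a / rr c + (1 - rr a / rr c) * u = s / rr c"
        unfolding u_def e_def s_def using b lt by (intro alg2) auto
      finally show ?thesis using sl by (simp add: s_def)
    next
      case False
      with neq have gt: "t > e" by simp
      have sl: "\<not> s < rr c" using gt b lt unfolding s_def e_def by (simp add: field_simps)
      have "ev (splitR (Glue c fl fr) a) t = ev fr ((t - e) / (1 - e))"
        using 1 False by (simp add: E e_def)
      also have "(t - e) / (1 - e) = (s - rr c) / (1 - rr c)"
        unfolding e_def s_def using b lt by (intro alg3) auto
      finally show ?thesis using sl by (simp add: s_def)
    qed
  next
    case 2
    then have eq: "rr a = rr c" by (simp add: rr_def)
    have "(s - rr c) / (1 - rr c) = t" using b unfolding s_def eq by (simp add: field_simps)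
    then show ?thesis using 2 gtA eq by (simp add: s_def)
  next
    case 3
    then have lt: "rr c < rr a" by (simp add: rr_def of_rat_less)
    have R: "rr (rescale_ou a c) = (rr a - rr c) / (1 - rr c)" using 3
      by (simp add: rr_def Rep_rescale_ou of_rat_divide of_rat_diff)
    have "ev (splitR (Glue c fl fr) a) t = ev (splitR fr (rescale_ou a c)) t" using 3 by simp
    also have "\<dots> = ev fr (rr (rescale_ou a c) + (1 - rr (rescale_ou a c)) * t)" using Glue.IH(2) Glue.prems by simp
    also have "rr (rescale_ou a c) + (1 - rr (rescale_ou a c)) * t = (s - rr c) / (1 - rr c)"
      unfolding R s_def using b lt by (intro alg4) auto
    finally show ?thesis using gtA lt by (simp add: s_def)
  qed
qed

lemma II_left: "t \<in> II \<Longrightarrow> t < rr c \<Longrightarrow> t / rr c \<in> II"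
proof -
  assume h: "t \<in> II" "t < rr c"
  note b = rr_bounds[of c]
  have "t / rr c \<notin> \<rat>" using h b irr2[of t 0 "rr c"] by (auto simp: II_def)
  moreover have "0 < t / rr c" "t / rr c < 1" using h b by (auto simp: II_def field_simps)
  ultimately show ?thesis by (simp add: II_def)
qed

lemma II_right: "t \<in> II \<Longrightarrow> \<not> t < rr c \<Longrightarrow> (t - rr c) / (1 - rr c) \<in> II"
proof -
  assume h: "t \<in> II" "\<not> t < rr c"
  note b = rr_bounds[of c]
  have ne: "t \<noteq> rr c" using h b by (auto simp: II_def)
  have "(t - rr c) / (1 - rr c) \<notin> \<rat>" using h b by (intro irr2) (auto simp: II_def)
  moreover have "0 < (t - rr c) / (1 - rr c)" "(t - rr c) / (1 - rr c) < 1" using h b ne by (auto simp: II_def field_simps)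
  ultimately show ?thesis by (simp add: II_def)
qed

lemma II_left': "s \<in> II \<Longrightarrow> rr c * s \<in> II \<and> rr c * s < rr c"
proof -
  assume h: "s \<in> II"
  note b = rr_bounds[of c]
  have "rr c * s \<notin> \<rat>" using h b irr1[of s 0 "rr c"] by (auto simp: II_def)
  moreover have "0 < rr c * s" using h b by (auto simp: II_def)
  moreover have "rr c * s < rr c * 1" using h b by (intro mult_strict_left_mono) (auto simp: II_def)
  moreover have "rr c * s < 1" using \<open>rr c * s < rr c * 1\<close> b by linarith
  ultimately show ?thesis by (simp add: II_def)
qed

lemma II_right': "s \<in> II \<Longrightarrow> rr c + (1 - rr c) * s \<in> II \<and> \<not> rr c + (1 - rr c) * s < rr c"
proof -
  assume h: "s \<in> II"
  note b = rr_bounds[of c]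
  have "rr c + (1 - rr c) * s \<notin> \<rat>" using h b by (intro irr1) (auto simp: II_def)
  moreover have "0 < (1 - s) * (1 - rr c)" "0 \<le> (1 - rr c) * s" using h b by (auto simp: II_def)
  moreover have "s * rr c < s * 1" using h b by (intro mult_strict_left_mono) (auto simp: II_def)
  moreover have "0 < rr c + (1 - rr c) * s" "rr c + (1 - rr c) * s < 1" "\<not> rr c + (1 - rr c) * s < rr c"
    using h b calculation(2,3,4) by (simp_all add: II_def algebra_simps, linarith+)
  ultimately show ?thesis by (simp add: II_def)
qed

lemma ev_map: "ev (sf_map \<phi> x) t = \<phi> (ev x t)"
  by (induction x arbitrary: t) auto

lemma ev_ap: "t \<in> II \<Longrightarrow> ev (sf_ap F x) t = ev F t (ev x t)"
proof (induction F arbitrary: x t)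
  case (Const \<phi>)
  then show ?case by (simp add: ev_map)
next
  case (Glue c Fl Fr)
  note b = rr_bounds[of c]
  show ?case
  proof (cases "t < rr c")
    case True
    have I: "t / rr c \<in> II" using II_left Glue.prems True by blast
    have eq: "rr c * (t / rr c) = t" using b by simp
    have "ev (splitL x c) (t / rr c) = ev x (rr c * (t / rr c))" by (rule ev_splitL[OF I])
    also have "\<dots> = ev x t" unfolding eq by (rule refl)
    finally show ?thesis using True Glue.IH(1)[OF I] by simp
  next
    case False
    have I: "(t - rr c) / (1 - rr c) \<in> II" using II_right Glue.prems False by blast
    have eq: "rr c + (1 - rr c) * ((t - rr c) / (1 - rr c)) = t" using b by simp
    have "ev (splitR x c) ((t - rr c) / (1 - rr c)) = ev x (rr c + (1 - rr c) * ((t - rr c) / (1 - rr c)))" by (rule ev_splitR[OF I])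
    also have "\<dots> = ev x t" unfolding eq by (rule refl)
    finally show ?thesis using False Glue.IH(2)[OF I] by simp
  qed
qed

lemma G_const: "(\<forall>t\<in>II. P (ev (Const x) t)) = P x"
  using II_ne by auto

lemma G_glue: "(\<forall>t\<in>II. P (ev (Glue c f g) t)) = ((\<forall>t\<in>II. P (ev f t)) \<and> (\<forall>t\<in>II. P (ev g t)))"
proof (intro iffI conjI ballI)
  fix s assume A: "\<forall>t\<in>II. P (ev (Glue c f g) t)" and s: "s \<in> II"
  note b = rr_bounds[of c]
  from II_left'[OF s, of c] A have "P (ev (Glue c f g) (rr c * s))" by blast
  then show "P (ev f s)" using II_left'[OF s, of c] b by simp
next
  fix s assume A: "\<forall>t\<in>II. P (ev (Glue c f g) t)" and s: "s \<in> II"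
  note b = rr_bounds[of c]
  from II_right'[OF s, of c] A have "P (ev (Glue c f g) (rr c + (1 - rr c) * s))" by blast
  moreover have "(rr c + (1 - rr c) * s - rr c) / (1 - rr c) = s" using b by simp
  ultimately show "P (ev g s)" using II_right'[OF s, of c] by simp
next
  fix t assume A: "(\<forall>t\<in>II. P (ev f t)) \<and> (\<forall>t\<in>II. P (ev g t))" and t: "t \<in> II"
  then show "P (ev (Glue c f g) t)" using II_left[OF t] II_right[OF t] by auto
qed

lemma fold_star_ev: "fold_star h = (\<forall>t\<in>II. ev h t)"
proof (induction h)
  case (Const x)
  then show ?case using G_const[of "\<lambda>y. y"] by (simp add: fold_star_def)
next
  case (Glue c f g)
  have "fold_star (Glue c f g) = (fold_star f \<and> fold_star g)" by (simp add: fold_star_def)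
  then show ?case using Glue.IH G_glue[of "\<lambda>y. y" c f g] by simp
qed

lemma fold_sup_ev: "(fold_sup h \<le> e) = (\<forall>t\<in>II. ev h t \<le> e)"
proof (induction h)
  case (Const x)
  then show ?case using G_const[of "\<lambda>y. y \<le> e"] by (simp add: fold_sup_def)
next
  case (Glue c f g)
  then show ?case using G_glue[of "\<lambda>y. y \<le> e"] by (simp add: fold_sup_def)
qed

lemma fa_const[simp]: "fold_affine (Const k) = k" by (simp add: fold_affine_def)
lemma fa_glue[simp]: "fold_affine (Glue c f g) = Rep_ounit c * fold_affine f + (1 - Rep_ounit c) * fold_affine g"
  by (simp add: fold_affine_def)

lemma fa_lower: "(\<forall>t\<in>II. k \<le> ev h t) \<Longrightarrow> k \<le> fold_affine h"
proof (induction h)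
  case (Const x)
  then show ?case using G_const[of "\<lambda>y. k \<le> y"] by simp
next
  case (Glue c f g)
  then have "k \<le> fold_affine f" "k \<le> fold_affine g" using G_glue[of "\<lambda>y. k \<le> y"] by auto
  then have "Rep_ounit c * k \<le> Rep_ounit c * fold_affine f" "(1 - Rep_ounit c) * k \<le> (1 - Rep_ounit c) * fold_affine g"
    using Rep_bounds[of c] by (auto intro: mult_left_mono)
  then show ?case by (simp add: algebra_simps)
qed

lemma fa_zero: "(\<forall>t\<in>II. 0 \<le> ev h t) \<Longrightarrow> fold_affine h \<le> 0 \<Longrightarrow> (\<forall>t\<in>II. ev h t = 0)"
proof (induction h)
  case (Const x)
  then show ?case using G_const[of "\<lambda>y. 0 \<le> y"] by simp
next
  case (Glue c f g)
  have nf: "\<forall>t\<in>II. 0 \<le> ev f t" "\<forall>t\<in>II. 0 \<le> ev g t" using Glue.prems(1) G_glue[of "\<lambda>y. 0 \<le> y" c f g] by blast+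
  have f0: "0 \<le> fold_affine f" "0 \<le> fold_affine g" using fa_lower nf by auto
  have c: "0 < Rep_ounit c" "0 < 1 - Rep_ounit c" using Rep_bounds[of c] by auto
  have p1: "0 \<le> Rep_ounit c * fold_affine f" "0 \<le> (1 - Rep_ounit c) * fold_affine g" using f0 c by auto
  have "Rep_ounit c * fold_affine f \<le> 0" "(1 - Rep_ounit c) * fold_affine g \<le> 0" using Glue.prems(2) p1 by auto
  then have "fold_affine f \<le> 0" "fold_affine g \<le> 0" using c by (auto simp: mult_le_0_iff)
  then have "\<forall>t\<in>II. ev f t = 0" "\<forall>t\<in>II. ev g t = 0" using Glue.IH nf by auto
  then show ?case using G_glue[of "\<lambda>y. y = 0"] by blast
qed

lemma comb1: "C * u = A \<Longrightarrow> C * v = C - A \<Longrightarrow> P * p = C - A \<Longrightarrow> P * q = 1 - C \<Longrightarrow>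
   C * (u * L + v * R) + (1 - C) * F = A * L + P * (p * R + q * (F::rat))"
proof -
  assume h: "C * u = A" "C * v = C - A" "P * p = C - A" "P * q = 1 - C"
  have "C * (u * L + v * R) = (C * u) * L + (C * v) * R" by (simp add: algebra_simps)
  moreover have "P * (p * R + q * F) = (P * p) * R + (P * q) * F" by (simp add: algebra_simps)
  ultimately show ?thesis unfolding h by (simp add: algebra_simps)
qed

lemma comb2: "A * u = C \<Longrightarrow> A * v = A - C \<Longrightarrow> P * p = A - C \<Longrightarrow> P * q = 1 - A \<Longrightarrow>
   C * Fl + P * (p * L + q * R) = A * (u * Fl + v * L) + (1 - A) * (R::rat)"
proof -
  assume h: "A * u = C" "A * v = A - C" "P * p = A - C" "P * q = 1 - A"
  have "A * (u * Fl + v * L) = (A * u) * Fl + (A * v) * L" by (simp add: algebra_simps)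
  moreover have "P * (p * L + q * R) = (P * p) * L + (P * q) * R" by (simp add: algebra_simps)
  ultimately show ?thesis unfolding h by (simp add: algebra_simps)
qed

lemma fa_split: "fold_affine x = Rep_ounit a * fold_affine (splitL x a) + (1 - Rep_ounit a) * fold_affine (splitR x a)"
proof (induction x arbitrary: a)
  case (Const x)
  then show ?case by (simp add: algebra_simps)
next
  case (Glue c fl fr)
  define A where "A = Rep_ounit a"
  define C where "C = Rep_ounit c"
  have b: "0 < A" "A < 1" "0 < C" "C < 1" using Rep_bounds[of a] Rep_bounds[of c] by (auto simp: A_def C_def)
  consider "A < C" | "A = C" | "C < A" by fastforce
  then show ?case
  proof cases
    case 1
    define L where "L = fold_affine (splitL fl (div_ou a c))"
    define R where "R = fold_affine (splitR fl (div_ou a c))"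
    have IH: "fold_affine fl = A / C * L + (1 - A / C) * R"
      using Glue.IH(1)[of "div_ou a c"] 1 by (simp add: Rep_div_ou A_def C_def L_def R_def)
    have E: "Rep_ounit (Abs_ounit ((C - A) / (1 - A))) = (C - A) / (1 - A)"
      using 1 Rep_Abs3[of a c] by (simp add: A_def C_def)
    have e1: "(1 - A) * ((C - A) / (1 - A)) = C - A" "(1 - A) * (1 - (C - A) / (1 - A)) = 1 - C"
      using b by (simp_all add: field_simps)
    have e2: "C * (A / C) = A" "C * (1 - A / C) = C - A" using b by (simp_all add: field_simps)
    have "fold_affine (splitL (Glue c fl fr) a) = L" using 1 by (simp add: A_def C_def L_def)
    moreover have "fold_affine (splitR (Glue c fl fr) a) = (C - A) / (1 - A) * R + (1 - (C - A) / (1 - A)) * fold_affine fr"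
      using 1 E by (simp add: A_def C_def R_def)
    moreover have "fold_affine (Glue c fl fr) = C * fold_affine fl + (1 - C) * fold_affine fr" by (simp add: C_def)
    ultimately show ?thesis unfolding A_def[symmetric] IH using comb1[OF e2 e1] by simp
  next
    case 2
    then show ?thesis by (simp add: A_def C_def)
  next
    case 3
    define L where "L = fold_affine (splitL fr (rescale_ou a c))"
    define R where "R = fold_affine (splitR fr (rescale_ou a c))"
    have IH: "fold_affine fr = (A - C) / (1 - C) * L + (1 - (A - C) / (1 - C)) * R"
      using Glue.IH(2)[of "rescale_ou a c"] 3 by (simp add: Rep_rescale_ou A_def C_def L_def R_def)
    have D: "Rep_ounit (div_ou c a) = C / A" using 3 Rep_div_ou[of c a] by (simp add: A_def C_def)
    have e1: "(1 - C) * ((A - C) / (1 - C)) = A - C" "(1 - C) * (1 - (A - C) / (1 - C)) = 1 - A"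
      using b by (simp_all add: field_simps)
    have e2: "A * (C / A) = C" "A * (1 - C / A) = A - C" using b by (simp_all add: field_simps)
    have "fold_affine (splitL (Glue c fl fr) a) = C / A * fold_affine fl + (1 - C / A) * L"
      using 3 D by (simp add: A_def C_def L_def)
    moreover have "fold_affine (splitR (Glue c fl fr) a) = R"
      using 3 by (simp add: A_def C_def R_def)
    moreover have "fold_affine (Glue c fl fr) = C * fold_affine fl + (1 - C) * fold_affine fr" by (simp add: C_def)
    ultimately show ?thesis unfolding A_def[symmetric] IH using comb2[OF e2 e1] by simp
  qed
qed


lemma fa_map_lin: "fold_affine (sf_map (\<lambda>b. k + s * b) h) = k + s * fold_affine h"
  by (induction h) (simp_all add: algebra_simps)

lemma fa_lin0: "fold_affine (sf_ap (sf_map (\<lambda>a b. p * a + s * b) h1) h2) = p * fold_affine h1 + s * fold_affine h2"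
proof (induction h1 arbitrary: h2)
  case (Const a)
  then show ?case by (simp add: fa_map_lin)
next
  case (Glue c f g)
  have "fold_affine (sf_ap (sf_map (\<lambda>a b. p * a + s * b) (Glue c f g)) h2)
     = Rep_ounit c * (p * fold_affine f + s * fold_affine (splitL h2 c))
       + (1 - Rep_ounit c) * (p * fold_affine g + s * fold_affine (splitR h2 c))"
    using Glue by simp
  also have "\<dots> = p * (Rep_ounit c * fold_affine f + (1 - Rep_ounit c) * fold_affine g)
       + s * (Rep_ounit c * fold_affine (splitL h2 c) + (1 - Rep_ounit c) * fold_affine (splitR h2 c))"
    by (simp add: algebra_simps)
  also have "\<dots> = p * fold_affine (Glue c f g) + s * fold_affine h2"
    using fa_split[of h2 c] by simp
  finally show ?case .
qed

lemma fa_lin: "(\<forall>a b. op a b = p * a + s * b) \<Longrightarrow>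
  fold_affine (sf_ap (sf_map op h1) h2) = p * fold_affine h1 + s * fold_affine h2"
proof -
  assume "\<forall>a b. op a b = p * a + s * b"
  then have "op = (\<lambda>a b. p * a + s * b)" by (intro ext) auto
  then show ?thesis using fa_lin0 by simp
qed

lemma fa_mono: "(\<forall>t\<in>II. ev h1 t \<le> ev h2 t) \<Longrightarrow> fold_affine h1 \<le> fold_affine h2"
proof -
  assume h: "\<forall>t\<in>II. ev h1 t \<le> ev h2 t"
  define D where "D = sf_ap (sf_map (\<lambda>a b. b - a) h1) h2"
  have "\<forall>t\<in>II. 0 \<le> ev D t" using h by (simp add: D_def ev_ap ev_map)
  then have "0 \<le> fold_affine D" by (rule fa_lower)
  moreover have "fold_affine D = (-1) * fold_affine h1 + 1 * fold_affine h2"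
    unfolding D_def by (rule fa_lin) simp
  ultimately show ?thesis by simp
qed

lemma char_equiv: "sf_equiv eq f g = (\<forall>t\<in>II. eq (ev f t) (ev g t))"
  by (simp add: sf_equiv_def sf_binop_def fold_star_ev ev_ap ev_map)

lemma char_lift: "ball_sup_lift B e f g = (\<forall>t\<in>II. B e (ev f t) (ev g t))"
  by (simp add: ball_sup_lift_def fold_star_ev ev_ap ev_map)

lemma char_inf: "ball_inf e f g = (\<forall>t\<in>II. ball_rat e (ev f t) (ev g t))"
  by (simp add: ball_inf_def norm_inf_def fold_sup_ev sf_binop_def ev_ap ev_map ball_rat_def)

lemma pointwise_ms:
  assumes ms: "is_metric_space eq B"
    and E: "\<And>f g. EQ f g = (\<forall>t\<in>II. eq (ev f t) (ev g t))"
    and BB: "\<And>e f g. BBB e f g = (\<forall>t\<in>II. B e (ev f t) (ev g t))"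
  shows "is_metric_space EQ BBB"
proof -
  note m = ms[unfolded is_metric_space_def]
  note eqv = m[THEN conjunct1]
  note resp = m[THEN conjunct2, THEN conjunct1, rule_format]
  note refl = m[THEN conjunct2, THEN conjunct2, THEN conjunct1, rule_format]
  note sym = m[THEN conjunct2, THEN conjunct2, THEN conjunct2, THEN conjunct1, rule_format]
  note tri = m[THEN conjunct2, THEN conjunct2, THEN conjunct2, THEN conjunct2, THEN conjunct1, rule_format]
  note cl = m[THEN conjunct2, THEN conjunct2, THEN conjunct2, THEN conjunct2, THEN conjunct2, THEN conjunct1]
  note sep = m[THEN conjunct2, THEN conjunct2, THEN conjunct2, THEN conjunct2, THEN conjunct2, THEN conjunct2]
  have er: "eq x x" for x using eqv by (simp add: equivp_reflp)
  have es: "eq x y \<Longrightarrow> eq y x" for x y using eqv by (meson equivp_symp)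
  have et: "eq x y \<Longrightarrow> eq y z \<Longrightarrow> eq x z" for x y z using eqv by (meson equivp_transp)
  have "equivp EQ"
  proof (rule equivpI)
    show "reflp EQ" unfolding reflp_def E using er by simp
    show "symp EQ" unfolding symp_def E using es by simp
    show "transp EQ" unfolding transp_def E
    proof (intro allI impI ballI)
      fix x y z t assume "\<forall>t\<in>II. eq (ev x t) (ev y t)" "\<forall>t\<in>II. eq (ev y t) (ev z t)" "t \<in> II"
      then show "eq (ev x t) (ev z t)" using et by blast
    qed
  qed
  moreover have "\<forall>e f f' g g'. 0 < e \<longrightarrow> EQ f f' \<longrightarrow> EQ g g' \<longrightarrow> (BBB e f g \<longleftrightarrow> BBB e f' g')"
  proof (intro allI impI)
    fix e :: rat and f f' g g' assume h: "0 < e" "EQ f f'" "EQ g g'"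
    have "\<forall>t\<in>II. B e (ev f t) (ev g t) = B e (ev f' t) (ev g' t)"
    proof
      fix t assume "t \<in> II"
      then show "B e (ev f t) (ev g t) = B e (ev f' t) (ev g' t)"
        using h E resp[of e "ev f t" "ev f' t" "ev g t" "ev g' t"] by simp
    qed
    then show "BBB e f g = BBB e f' g'" unfolding BB by simp
  qed
  moreover have "\<forall>e f. 0 < e \<longrightarrow> BBB e f f" unfolding BB using refl by simp
  moreover have "\<forall>e f g. 0 < e \<longrightarrow> BBB e f g \<longrightarrow> BBB e g f" unfolding BB using sym by simp
  moreover have "\<forall>e1 e2 f g h. 0 < e1 \<longrightarrow> 0 < e2 \<longrightarrow> BBB e1 f g \<longrightarrow> BBB e2 g h \<longrightarrow> BBB (e1 + e2) f h"
    unfolding BB using tri by blast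
  moreover have "\<forall>e f g. 0 < e \<longrightarrow> (\<forall>d. 0 < d \<longrightarrow> e < d \<longrightarrow> BBB d f g) \<longrightarrow> BBB e f g"
  proof (intro allI impI)
    fix e :: rat and f g assume h: "0 < e" "\<forall>d. 0 < d \<longrightarrow> e < d \<longrightarrow> BBB d f g"
    show "BBB e f g" unfolding BB
    proof
      fix t assume t: "t \<in> II"
      have "\<forall>d. 0 < d \<longrightarrow> e < d \<longrightarrow> B d (ev f t) (ev g t)" using h(2) t unfolding BB by simp
      then show "B e (ev f t) (ev g t)" using cl h(1) by simp
    qed
  qed
  moreover have "\<forall>f g. (\<forall>e. 0 < e \<longrightarrow> BBB e f g) \<longrightarrow> EQ f g"
  proof (intro allI impI)
    fix f g assume h: "\<forall>e. 0 < e \<longrightarrow> BBB e f g"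
    show "EQ f g" unfolding E
    proof
      fix t assume t: "t \<in> II"
      have "\<forall>e::rat. 0 < e \<longrightarrow> B e (ev f t) (ev g t)" using h t unfolding BB by simp
      then show "eq (ev f t) (ev g t)" using sep by simp
    qed
  qed
  ultimately show ?thesis unfolding is_metric_space_def by (intro conjI)
qed

lemma rat_close: "0 < e \<Longrightarrow> (\<forall>d. 0 < d \<longrightarrow> e < d \<longrightarrow> x \<le> d) \<Longrightarrow> (x::rat) \<le> e"
proof (rule ccontr)
  assume h: "\<forall>d. 0 < d \<longrightarrow> e < d \<longrightarrow> x \<le> d" "\<not> x \<le> e" and e: "0 < e"
  show False using h(1)[rule_format, of "(x + e) / 2"] h(2) e by simp
qed

lemma ms_rat: "is_metric_space (=) ball_rat"
  unfolding is_metric_space_def ball_rat_def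
proof (intro conjI allI impI)
  show "equivp ((=) :: rat \<Rightarrow> rat \<Rightarrow> bool)" by (rule identity_equivp)
next
  fix e x y :: rat
  assume "0 < e" "\<bar>x - y\<bar> \<le> e" then show "\<bar>y - x\<bar> \<le> e" by (simp add: abs_minus_commute)
next
  fix e1 e2 x y z :: rat
  assume "\<bar>x - y\<bar> \<le> e1" "\<bar>y - z\<bar> \<le> e2" then show "\<bar>x - z\<bar> \<le> e1 + e2" by linarith
next
  fix e x y :: rat
  assume "0 < e" "\<forall>d. 0 < d \<longrightarrow> e < d \<longrightarrow> \<bar>x - y\<bar> \<le> d" then show "\<bar>x - y\<bar> \<le> e" by (rule rat_close)
next
  fix x y :: rat
  assume h: "\<forall>e. 0 < e \<longrightarrow> \<bar>x - y\<bar> \<le> e"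
  show "x = y"
  proof (rule ccontr)
    assume "x \<noteq> y"
    then show False using h(1)[rule_format, of "\<bar>x - y\<bar> / 2"] by simp
  qed
qed auto



definition AB :: "rat stepfun \<Rightarrow> rat stepfun \<Rightarrow> rat stepfun" where
  "AB f g = sf_map abs (sf_binop (-) f g)"

lemma ev_AB: "t \<in> II \<Longrightarrow> ev (AB f g) t = \<bar>ev f t - ev g t\<bar>"
  by (simp add: AB_def sf_binop_def ev_map ev_ap)

lemma ball1_AB: "ball_1 e f g = (fold_affine (AB f g) \<le> e)"
  by (simp add: ball_1_def norm_1_def AB_def)

lemma msinf: "is_metric_space (sf_equiv (=)) ball_inf"
  by (rule pointwise_ms[of "(=)" ball_rat]) (simp_all add: ms_rat char_equiv char_inf)

lemma ms_1: "is_metric_space (sf_equiv (=)) ball_1"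
proof -
  have eqv: "equivp (sf_equiv ((=) :: rat \<Rightarrow> rat \<Rightarrow> bool))"
    using msinf unfolding is_metric_space_def by blast
  have ce: "sf_equiv (=) f g = (\<forall>t\<in>II. ev f t = ev g t)" for f g :: "rat stepfun"
    by (simp add: char_equiv)
  have fa0: "fold_affine (AB f g) \<ge> 0" for f g
    using fa_lower[of 0 "AB f g"] by (simp add: ev_AB)
  have resp: "fold_affine (AB f g) = fold_affine (AB f' g')"
    if "sf_equiv (=) f f'" "sf_equiv (=) g g'" for f f' g g'
  proof -
    have "\<forall>t\<in>II. ev (AB f g) t = ev (AB f' g') t" using that by (simp add: ce ev_AB)
    then show ?thesis using fa_mono[of "AB f g" "AB f' g'"] fa_mono[of "AB f' g'" "AB f g"] by force
  qed
  have refl: "fold_affine (AB f f) \<le> 0" for f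
    using fa_mono[of "AB f f" "Const 0"] by (simp add: ev_AB)
  have sym: "fold_affine (AB g f) \<le> fold_affine (AB f g)" for f g
    using fa_mono[of "AB g f" "AB f g"] by (simp add: ev_AB abs_minus_commute)
  have tri: "fold_affine (AB f h) \<le> fold_affine (AB f g) + fold_affine (AB g h)" for f g h
  proof -
    have pt: "\<bar>a - c\<bar> \<le> \<bar>a - b\<bar> + \<bar>b - c\<bar>" for a b c :: rat by linarith
    define S where "S = sf_ap (sf_map (\<lambda>a b. 1 * a + 1 * b) (AB f g)) (AB g h)"
    have "fold_affine S = 1 * fold_affine (AB f g) + 1 * fold_affine (AB g h)"
      unfolding S_def by (rule fa_lin0)
    moreover have "\<forall>t\<in>II. ev (AB f h) t \<le> ev S t"
      by (simp add: S_def ev_ap ev_map ev_AB) (simp add: pt)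
    ultimately show ?thesis using fa_mono[of "AB f h" S] by simp
  qed
  have sep: "sf_equiv (=) f g" if h: "\<forall>e. 0 < e \<longrightarrow> fold_affine (AB f g) \<le> e" for f g
  proof -
    have "fold_affine (AB f g) \<le> 0"
    proof (rule ccontr)
      assume "\<not> fold_affine (AB f g) \<le> 0"
      then show False using h[rule_format, of "fold_affine (AB f g) / 2"] by simp
    qed
    then have "\<forall>t\<in>II. ev (AB f g) t = 0" using fa_zero[of "AB f g"] by (simp add: ev_AB)
    then show ?thesis by (simp add: ce ev_AB)
  qed
  show ?thesis unfolding is_metric_space_def ball1_AB
  proof (intro conjI allI impI)
    show "equivp (sf_equiv ((=) :: rat \<Rightarrow> rat \<Rightarrow> bool))" by (rule eqv)
  next
    fix e :: rat and f f' g g' :: "rat stepfun" assume "0 < e" "sf_equiv (=) f f'" "sf_equiv (=) g g'"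
    then show "(fold_affine (AB f g) \<le> e) = (fold_affine (AB f' g') \<le> e)" using resp by simp
  next
    fix e :: rat and f :: "rat stepfun" assume "0 < e" then show "fold_affine (AB f f) \<le> e" using refl[of f] by simp
  next
    fix e :: rat and f g :: "rat stepfun" assume "0 < e" "fold_affine (AB f g) \<le> e"
    then show "fold_affine (AB g f) \<le> e" using sym[of g f] by simp
  next
    fix e1 e2 :: rat and f g h :: "rat stepfun" assume "fold_affine (AB f g) \<le> e1" "fold_affine (AB g h) \<le> e2"
    then show "fold_affine (AB f h) \<le> e1 + e2" using tri[of f h g] by simp
  next
    fix e :: rat and f g :: "rat stepfun" assume "0 < e" "\<forall>d. 0 < d \<longrightarrow> e < d \<longrightarrow> fold_affine (AB f g) \<le> d"
    then show "fold_affine (AB f g) \<le> e" by (rule rat_close)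
  next
    fix f g :: "rat stepfun" assume "\<forall>e. 0 < e \<longrightarrow> fold_affine (AB f g) \<le> e"
    then show "sf_equiv (=) f g" by (rule sep)
  qed
qed

theorem mainTheorem11:
  shows "is_metric_space (sf_equiv (=)) ball_inf
       \<and> is_metric_space (sf_equiv (=)) ball_1
       \<and> (\<forall>(eq :: 'a \<Rightarrow> 'a \<Rightarrow> bool) B. is_metric_space eq B \<longrightarrow>
             is_metric_space (sf_equiv eq) (ball_sup_lift B))"
proof (intro conjI allI impI)
  show "is_metric_space (sf_equiv (=)) ball_inf"
    by (rule msinf)
  show "is_metric_space (sf_equiv (=)) ball_1" by (rule ms_1)
  fix eq :: "'a \<Rightarrow> 'a \<Rightarrow> bool" and B
  assume "is_metric_space eq B"
  then show "is_metric_space (sf_equiv eq) (ball_sup_lift B)"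
    by (rule pointwise_ms[of eq B]) (simp_all add: char_equiv char_lift)
qed

end
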